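(* Let $n\ge3$ and let $f$ be a $\gamma_{tr3}(P_3\square P_n)$-function such that the number of vertices $v$ with $f(v)=\emptyset$ is minimum among all $\gamma_{tr3}(P_3\square P_n)$-functions. Then $|f((2,j))|\in\{0,1\}$ for every $j\in\{0,1,\dots,n-1\}$.
   Context: $P_m$ denotes the directed path with vertex set $\{0,1,\dots,m-1\}$ and arcs $(i,i+1)$ for $0\le i\le m-2$. The Cartesian product $D_1\square D_2$ has vertex set $V(D_1)\times V(D_2)$, with an arc from $(x_1,y_1)$ to $(x_2,y_2)$ iff either $(x_1,x_2)$ is an arc of $D_1$ and $y_1=y_2$, or $x_1=x_2$ and $(y_1,y_2)$ is an arc of $D_2$. For a digraph $D$ and positive integer $k$, a $k$-rainbow dominating function on $D$ is $f:V(D)\to\mathcal P(\{1,\dots,k\})$ such that every $v$ with $f(v)=\emptyset$ satisfies $\bigcup_{u\in N^-(v)}f(u)=\{1,\dots,k\}$, where $N^-(v)$ is the set of in-neighbors of $v$; its weight is $\sum_v|f(v)|$. It is total if additionally the subdigraph induced by $\{v:f(v)\ne\emptyset\}$ has no isolated vertex (a vertex with neither in- nor out-neighbors in it). $\gamma_{trk}(D)$ is the minimum weight of a total $k$-rainbow dominating function, and a $\gamma_{trk}(D)$-function is one attaining it. *)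

theory Defs
  imports Main
begin

type_synonym 'a digraph = "'a set \<times> ('a \<times> 'a) set"

definition verts :: "'a digraph \<Rightarrow> 'a set" where "verts D = fst D"
definition arcs :: "'a digraph \<Rightarrow> ('a \<times> 'a) set" where "arcs D = snd D"

definition dpath :: "nat \<Rightarrow> nat digraph" where
  "dpath m = ({0..<m}, {(i, Suc i) | i. Suc i < m})"

definition cart_prod :: "'a digraph \<Rightarrow> 'b digraph \<Rightarrow> ('a \<times> 'b) digraph" where
  "cart_prod D1 D2 = (verts D1 \<times> verts D2,
     {((x1, y1), (x2, y2)) | x1 y1 x2 y2.
        ((x1, x2) \<in> arcs D1 \<and> y1 = y2 \<and> y1 \<in> verts D2) \<or>
        (x1 = x2 \<and> x1 \<in> verts D1 \<and> (y1, y2) \<in> arcs D2)})"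

definition in_nbrs :: "'a digraph \<Rightarrow> 'a \<Rightarrow> 'a set" where
  "in_nbrs D v = {u \<in> verts D. (u, v) \<in> arcs D}"

definition rainbow_dom :: "nat \<Rightarrow> 'a digraph \<Rightarrow> ('a \<Rightarrow> nat set) \<Rightarrow> bool" where
  "rainbow_dom k D f \<longleftrightarrow>
     (\<forall>v \<in> verts D. f v \<subseteq> {1..k}) \<and>
     (\<forall>v \<in> verts D. f v = {} \<longrightarrow> (\<Union>u \<in> in_nbrs D v. f u) = {1..k})"

text \<open>Total: no vertex with nonempty label is isolated in the subdigraph induced by such vertices.\<close>
definition total_rainbow_dom :: "nat \<Rightarrow> 'a digraph \<Rightarrow> ('a \<Rightarrow> nat set) \<Rightarrow> bool" where
  "total_rainbow_dom k D f \<longleftrightarrow> rainbow_dom k D f \<and>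
     (\<forall>v \<in> verts D. f v \<noteq> {} \<longrightarrow>
        (\<exists>u \<in> verts D. u \<noteq> v \<and> f u \<noteq> {} \<and> ((u, v) \<in> arcs D \<or> (v, u) \<in> arcs D)))"

definition rd_weight :: "'a digraph \<Rightarrow> ('a \<Rightarrow> nat set) \<Rightarrow> nat" where
  "rd_weight D f = (\<Sum>v \<in> verts D. card (f v))"

definition gamma_trk :: "nat \<Rightarrow> 'a digraph \<Rightarrow> nat" where
  "gamma_trk k D = Inf {rd_weight D f | f. total_rainbow_dom k D f}"

definition gamma_trk_function :: "nat \<Rightarrow> 'a digraph \<Rightarrow> ('a \<Rightarrow> nat set) \<Rightarrow> bool" where
  "gamma_trk_function k D f \<longleftrightarrow> total_rainbow_dom k D f \<and> rd_weight D f = gamma_trk k D"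

definition empty_count :: "'a digraph \<Rightarrow> ('a \<Rightarrow> nat set) \<Rightarrow> nat" where
  "empty_count D f = card {v \<in> verts D. f v = {}}"

end

theory Submission
  imports Defs
begin

lemma verts_D: "verts (cart_prod (dpath 3) (dpath n)) = {0..<3} \<times> {0..<n}"
  by (simp add: cart_prod_def verts_def dpath_def)

lemma arcs_from_2:
  assumes "((2::nat, j), w) \<in> arcs (cart_prod (dpath 3) (dpath n))"
  shows "w = (2, Suc j) \<and> Suc j < n"
  using assms by (auto simp: cart_prod_def verts_def arcs_def dpath_def)

lemma arc_2:
  assumes "Suc j < n"
  shows "((2::nat, j), (2, Suc j)) \<in> arcs (cart_prod (dpath 3) (dpath n))"
  using assms by (auto simp: cart_prod_def verts_def arcs_def dpath_def)

lemma gamma_le: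
  assumes "total_rainbow_dom k D g"
  shows "gamma_trk k D \<le> rd_weight D g"
  unfolding gamma_trk_def using assms
  by (intro cInf_lower) auto

lemma case1:
  assumes fin: "finite (verts D)" and v0: "v0 \<in> verts D"
    and tr: "total_rainbow_dom k D f" and a: "a \<in> f v0" and c2: "card (f v0) \<ge> 2"
    and out: "\<forall>w. (v0, w) \<in> arcs D \<longrightarrow> f w \<noteq> {}"
  shows "total_rainbow_dom k D (f(v0 := {a})) \<and> rd_weight D (f(v0 := {a})) < rd_weight D f"
proof
  let ?g = "f(v0 := {a})"
  have sub: "\<forall>v \<in> verts D. f v \<subseteq> {1..k}"
    and dom: "\<forall>v \<in> verts D. f v = {} \<longrightarrow> (\<Union>u \<in> in_nbrs D v. f u) = {1..k}"
    and tot: "\<forall>v \<in> verts D. f v \<noteq> {} \<longrightarrow>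
        (\<exists>u \<in> verts D. u \<noteq> v \<and> f u \<noteq> {} \<and> ((u, v) \<in> arcs D \<or> (v, u) \<in> arcs D))"
    using tr unfolding total_rainbow_dom_def rainbow_dom_def by auto
  have ne: "\<And>u. (?g u = {}) = (f u = {})" using a by auto
  have "\<forall>v \<in> verts D. ?g v \<subseteq> {1..k}" proof -
    have "a \<in> {1..k}" using sub a v0 by blast
    moreover have "f v0 \<subseteq> {1..k}" using sub v0 by blast
    ultimately show ?thesis using sub by (auto simp del: atLeastAtMost_iff)
  qed
  moreover have "\<forall>v \<in> verts D. ?g v = {} \<longrightarrow> (\<Union>u \<in> in_nbrs D v. ?g u) = {1..k}"
  proof (intro ballI impI)
    fix v assume v: "v \<in> verts D" and e: "?g v = {}"
    then have "v \<noteq> v0" "f v = {}" by (auto split: if_splits)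
    then have "v0 \<notin> in_nbrs D v" using out by (auto simp: in_nbrs_def)
    then have "(\<Union>u \<in> in_nbrs D v. ?g u) = (\<Union>u \<in> in_nbrs D v. f u)" by auto
    then show "(\<Union>u \<in> in_nbrs D v. ?g u) = {1..k}" using dom v \<open>f v = {}\<close> by auto
  qed
  moreover have "\<forall>v \<in> verts D. ?g v \<noteq> {} \<longrightarrow>
        (\<exists>u \<in> verts D. u \<noteq> v \<and> ?g u \<noteq> {} \<and> ((u, v) \<in> arcs D \<or> (v, u) \<in> arcs D))"
    using tot unfolding ne .
  ultimately show "total_rainbow_dom k D ?g"
    unfolding total_rainbow_dom_def rainbow_dom_def by blast
  have w1: "rd_weight D ?g = card (?g v0) + (\<Sum>v \<in> verts D - {v0}. card (?g v))"
    unfolding rd_weight_def using fin v0 by (simp add: sum.remove)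
  have w2: "(\<Sum>v \<in> verts D - {v0}. card (?g v)) = (\<Sum>v \<in> verts D - {v0}. card (f v))"
    by (intro sum.cong) auto
  have w3: "rd_weight D f = card (f v0) + (\<Sum>v \<in> verts D - {v0}. card (f v))"
    unfolding rd_weight_def using fin v0 by (simp add: sum.remove)
  show "rd_weight D ?g < rd_weight D f" using c2 w1 w2 w3 by simp
qed

lemma case2:
  assumes fin: "finite (verts D)" and v0: "v0 \<in> verts D" and v1: "v1 \<in> verts D"
    and tr: "total_rainbow_dom k D f" and a: "a \<in> f v0" and c2: "card (f v0) \<ge> 2"
    and e1: "f v1 = {}" and arc: "(v0, v1) \<in> arcs D"
    and out: "\<forall>w. (v0, w) \<in> arcs D \<longrightarrow> w = v1"
  shows "total_rainbow_dom k D (f(v0 := {a}, v1 := f v0 - {a})) \<and>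
         rd_weight D (f(v0 := {a}, v1 := f v0 - {a})) = rd_weight D f \<and>
         empty_count D (f(v0 := {a}, v1 := f v0 - {a})) < empty_count D f"
proof (intro conjI)
  let ?g = "f(v0 := {a}, v1 := f v0 - {a})"
  have sub: "\<forall>v \<in> verts D. f v \<subseteq> {1..k}"
    and dom: "\<forall>v \<in> verts D. f v = {} \<longrightarrow> (\<Union>u \<in> in_nbrs D v. f u) = {1..k}"
    and tot: "\<forall>v \<in> verts D. f v \<noteq> {} \<longrightarrow>
        (\<exists>u \<in> verts D. u \<noteq> v \<and> f u \<noteq> {} \<and> ((u, v) \<in> arcs D \<or> (v, u) \<in> arcs D))"
    using tr unfolding total_rainbow_dom_def rainbow_dom_def by auto
  have neq: "v0 \<noteq> v1" using e1 a by auto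
  have fin0: "finite (f v0)" using c2 card.infinite by fastforce
  have ne1: "f v0 - {a} \<noteq> {}"
  proof
    assume "f v0 - {a} = {}"
    then have "f v0 \<subseteq> {a}" by auto
    then have "card (f v0) \<le> card {a}" by (intro card_mono) auto
    then have "card (f v0) \<le> 1" by simp
    then show False using c2 by simp
  qed
  have gv0: "?g v0 = {a}" using neq by simp
  have gv1: "?g v1 = f v0 - {a}" by simp
  have geq: "\<And>u. u \<noteq> v0 \<Longrightarrow> u \<noteq> v1 \<Longrightarrow> ?g u = f u" by simp
  have ne: "\<And>u. f u \<noteq> {} \<Longrightarrow> ?g u \<noteq> {}"
  proof -
    fix u assume "f u \<noteq> {}"
    then show "?g u \<noteq> {}" using gv0 e1 geq[of u] by (cases "u = v0"; cases "u = v1") auto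
  qed
  have "\<forall>v \<in> verts D. ?g v \<subseteq> {1..k}" proof -
    have "a \<in> {1..k}" using sub a v0 by blast
    moreover have "f v0 \<subseteq> {1..k}" using sub v0 by blast
    ultimately show ?thesis using sub by auto
  qed
  moreover have "\<forall>v \<in> verts D. ?g v = {} \<longrightarrow> (\<Union>u \<in> in_nbrs D v. ?g u) = {1..k}"
  proof (intro ballI impI)
    fix v assume v: "v \<in> verts D" and e: "?g v = {}"
    have "v \<noteq> v0" using e gv0 by auto
    moreover have "v \<noteq> v1" using e gv1 ne1 by auto
    ultimately have "v \<noteq> v0" "v \<noteq> v1" "f v = {}" using e geq[of v] by auto
    then have "v0 \<notin> in_nbrs D v" using out by (auto simp: in_nbrs_def)
    have "(\<Union>u \<in> in_nbrs D v. f u) \<subseteq> (\<Union>u \<in> in_nbrs D v. ?g u)"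
    proof (intro UN_mono)
      show "\<And>u. u \<in> in_nbrs D v \<Longrightarrow> f u \<subseteq> ?g u"
        using \<open>v0 \<notin> in_nbrs D v\<close> e1 by auto
    qed simp
    moreover have "(\<Union>u \<in> in_nbrs D v. ?g u) \<subseteq> {1..k}"
    proof -
      have "a \<in> {1..k}" using sub a v0 by blast
      moreover have "f v0 \<subseteq> {1..k}" using sub v0 by blast
      ultimately show ?thesis using sub by (auto simp: in_nbrs_def split: if_splits)
    qed
    ultimately show "(\<Union>u \<in> in_nbrs D v. ?g u) = {1..k}" using dom v \<open>f v = {}\<close> by auto
  qed
  moreover have "\<forall>v \<in> verts D. ?g v \<noteq> {} \<longrightarrow>
        (\<exists>u \<in> verts D. u \<noteq> v \<and> ?g u \<noteq> {} \<and> ((u, v) \<in> arcs D \<or> (v, u) \<in> arcs D))"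
  proof (intro ballI impI)
    fix v assume v: "v \<in> verts D" and nv: "?g v \<noteq> {}"
    show "\<exists>u \<in> verts D. u \<noteq> v \<and> ?g u \<noteq> {} \<and> ((u, v) \<in> arcs D \<or> (v, u) \<in> arcs D)"
    proof (cases "v = v0")
      case True then show ?thesis using v1 neq ne1 arc by (intro bexI[of _ v1]) auto
    next
      case False
      show ?thesis
      proof (cases "v = v1")
        case True then show ?thesis using v0 neq gv0 arc by (intro bexI[of _ v0]) auto
      next
        case False
        then have "f v \<noteq> {}" using nv \<open>v \<noteq> v0\<close> by simp
        then obtain u where "u \<in> verts D" "u \<noteq> v" "f u \<noteq> {}" "(u, v) \<in> arcs D \<or> (v, u) \<in> arcs D"
          using tot v by blast
        then show ?thesis using ne by blast
      qed
    qed
  qed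
  ultimately show "total_rainbow_dom k D ?g"
    unfolding total_rainbow_dom_def rainbow_dom_def by blast
  have v1r: "v1 \<in> verts D - {v0}" using v1 neq by simp
  have w1: "rd_weight D ?g = card (?g v0) + (card (?g v1) + (\<Sum>v \<in> verts D - {v0} - {v1}. card (?g v)))"
    unfolding rd_weight_def using fin v0 v1r by (simp add: sum.remove)
  have w2: "(\<Sum>v \<in> verts D - {v0} - {v1}. card (?g v)) = (\<Sum>v \<in> verts D - {v0} - {v1}. card (f v))"
    by (intro sum.cong) auto
  have w3: "card (?g v0) + card (?g v1) = card (f v0) + card (f v1)"
    unfolding gv0 gv1 using e1 a fin0 c2 by (simp add: card_Diff_singleton)
  have w4: "rd_weight D f = card (f v0) + (card (f v1) + (\<Sum>v \<in> verts D - {v0} - {v1}. card (f v)))"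
    unfolding rd_weight_def using fin v0 v1r by (simp add: sum.remove)
  show "rd_weight D ?g = rd_weight D f" unfolding w1 w2 w4 using w3 by linarith
  have c1: "{v \<in> verts D. ?g v = {}} \<subseteq> {v \<in> verts D. f v = {}} - {v1}"
    using ne ne1 by auto
  have c2: "finite {v \<in> verts D. f v = {}}" using fin by simp
  have c3: "v1 \<in> {v \<in> verts D. f v = {}}" using v1 e1 by simp
  have "card {v \<in> verts D. ?g v = {}} < card {v \<in> verts D. f v = {}}"
  proof -
    have "card {v \<in> verts D. ?g v = {}} \<le> card ({v \<in> verts D. f v = {}} - {v1})"
      using c1 c2 by (intro card_mono) auto
    also have "\<dots> < card {v \<in> verts D. f v = {}}"
      using c2 c3 by (intro card_Diff1_less) auto
    finally show ?thesis .
  qed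
  then show "empty_count D ?g < empty_count D f" unfolding empty_count_def .
qed

theorem lemma4p6:
  fixes n :: nat and f :: "nat \<times> nat \<Rightarrow> nat set"
  assumes "n \<ge> 3"
    and "gamma_trk_function 3 (cart_prod (dpath 3) (dpath n)) f"
    and "\<forall>g. gamma_trk_function 3 (cart_prod (dpath 3) (dpath n)) g \<longrightarrow>
           empty_count (cart_prod (dpath 3) (dpath n)) f \<le> empty_count (cart_prod (dpath 3) (dpath n)) g"
  shows "\<forall>j < n. card (f (2, j)) \<in> {0, 1}"
proof (intro allI impI)
  fix j assume j: "j < n"
  let ?D = "cart_prod (dpath 3) (dpath n)"
  have tr: "total_rainbow_dom 3 ?D f" and wt: "rd_weight ?D f = gamma_trk 3 ?D"
    using assms(2) unfolding gamma_trk_function_def by auto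
  have fin: "finite (verts ?D)" by (simp add: verts_D)
  have v0: "(2, j) \<in> verts ?D" using j by (simp add: verts_D)
  show "card (f (2, j)) \<in> {0, 1}"
  proof (rule ccontr)
    assume "card (f (2, j)) \<notin> {0, 1}"
    then have c2: "card (f (2, j)) \<ge> 2" by auto
    then have "f (2, j) \<noteq> {}" by auto
    then obtain a where a: "a \<in> f (2, j)" by auto
    show False
    proof (cases "Suc j < n \<and> f (2, Suc j) = {}")
      case True
      have v1: "(2, Suc j) \<in> verts ?D" using True by (simp add: verts_D)
      from case2[OF fin v0 v1 tr a c2 _ arc_2] True arcs_from_2[of j _ n]
      obtain g where "total_rainbow_dom 3 ?D g" "rd_weight ?D g = rd_weight ?D f"
        "empty_count ?D g < empty_count ?D f" by blast
      then show False using assms(3) wt unfolding gamma_trk_function_def by fastforce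
    next
      case False
      have "\<forall>w. ((2, j), w) \<in> arcs ?D \<longrightarrow> f w \<noteq> {}"
        using False arcs_from_2[of j _ n] by blast
      from case1[OF fin v0 tr a c2 this]
      obtain g where "total_rainbow_dom 3 ?D g" "rd_weight ?D g < rd_weight ?D f" by blast
      then show False using gamma_le[of 3 ?D g] wt by simp
    qed
  qed
qed

end
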